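(* Let $P$ be a set of $n$ points in general position in the plane. Then there are two points $p_1,p_2\in\mathbb{R}^2$ such that (1) every closed halfplane containing at least one of $p_1,p_2$ contains at least $\frac{n}{5}$ points of $P$, and (2) every closed halfplane containing both $p_1$ and $p_2$ contains at least $\frac{2n}{5}$ points of $P$.
   Context: General position means no three points of $P$ are collinear. *)

theory Defs
  imports "HOL-Analysis.Analysis"
begin

definition closed_halfplane :: "(real^2) set \<Rightarrow> bool" where
  "closed_halfplane H \<longleftrightarrow> (\<exists>a b. a \<noteq> 0 \<and> H = {x. inner a x \<le> b})"

definition general_position :: "(real^2) set \<Rightarrow> bool" where
  "general_position P \<longleftrightarrow>
     (\<forall>p\<in>P. \<forall>q\<in>P. \<forall>r\<in>P. p \<noteq> q \<and> q \<noteq> r \<and> p \<noteq> r \<longrightarrow> \<not> collinear {p, q, r})"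

end

theory Submission
  imports Defs
begin

lemma inner2: "inner (a::real^2) x = a$1 * x$1 + a$2 * x$2"
  by (simp add: inner_vec_def sum_2)

lemma helly_le3:
  fixes F :: "(real^2) set set"
  assumes "finite F" "\<forall>s\<in>F. convex s"
    and "\<And>t. t \<subseteq> F \<Longrightarrow> t \<noteq> {} \<Longrightarrow> card t \<le> 3 \<Longrightarrow> \<Inter>t \<noteq> {}"
  shows "\<Inter>F \<noteq> {}"
proof (cases "card F \<ge> 3")
  case True
  show ?thesis
  proof (rule Helly)
    show "DIM(real^2) + 1 \<le> card F" using True by simp
    show "\<forall>s\<in>F. convex s" by fact
    fix t assume "t \<subseteq> F" "card t = DIM(real^2) + 1"
    then show "\<Inter>t \<noteq> {}" using assms(3)[of t] by fastforce
  qed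
next
  case False
  show ?thesis
  proof (cases "F = {}")
    case True then show ?thesis by simp
  next
    case False
    then show ?thesis using assms(3)[of F] \<open>\<not> card F \<ge> 3\<close> by simp
  qed
qed

lemma helly_real:
  fixes F :: "real set set"
  assumes "finite F" "\<forall>s\<in>F. convex s"
    and "\<And>A B. A \<in> F \<Longrightarrow> B \<in> F \<Longrightarrow> A \<inter> B \<noteq> {}"
  shows "\<Inter>F \<noteq> {}"
proof (cases "card F \<ge> 2")
  case True
  show ?thesis
  proof (rule Helly)
    show "DIM(real) + 1 \<le> card F" using True by simp
    show "\<forall>s\<in>F. convex s" by fact
    fix t assume "t \<subseteq> F" "card t = DIM(real) + 1"
    then obtain A B where "t = {A, B}" "A \<in> F" "B \<in> F"
      by (metis One_nat_def Suc_1 DIM_real card_2_iff insert_subset one_add_one)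
    then show "\<Inter>t \<noteq> {}" using assms(3)[of A B] by auto
  qed
next
  case False
  then have "card F = 0 \<or> card F = 1" by linarith
  then show ?thesis
  proof
    assume "card F = 0" then have "F = {}" using assms(1) by simp
    then show ?thesis by simp
  next
    assume "card F = 1" then obtain A where "F = {A}" by (auto simp: card_1_singleton_iff)
    then show ?thesis using assms(3)[of A A] by auto
  qed
qed

lemma count_inter:
  assumes "finite P" "finite T" "T \<noteq> {}" "\<forall>A\<in>T. A \<subseteq> P"
    and "(\<Sum>A\<in>T. real (card (P - A))) < real (card P)"
  shows "\<exists>x. \<forall>A\<in>T. x \<in> A"
proof -
  let ?U = "\<Union>A\<in>T. P - A"
  have "card ?U \<le> (\<Sum>A\<in>T. card (P - A))" using assms(2) by (rule card_UN_le)
  then have "real (card ?U) \<le> (\<Sum>A\<in>T. real (card (P - A)))"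
    by (metis of_nat_le_iff of_nat_sum)
  with assms(5) have "card ?U < card P" by linarith
  then have "\<not> P \<subseteq> ?U" using card_mono[of ?U P] assms(1) by (metis leD finite_UN_I finite_Diff assms(2))
  then obtain x where "x \<in> P" "x \<notin> ?U" by blast
  then show ?thesis by blast
qed


lemma hull_out:
  fixes S :: "(real^2) set"
  assumes "\<forall>y\<in>S. inner a y > b" "p \<in> convex hull S"
  shows "inner a p > b"
proof -
  have "convex hull S \<subseteq> {x. inner a x > b}"
    using assms(1) by (intro hull_minimal) (auto simp: convex_halfspace_gt)
  then show ?thesis using assms(2) by auto
qed

theorem theorem3:
  fixes P :: "(real^2) set" and n :: nat
  assumes "finite P" and "card P = n" and "general_position P"
  shows "\<exists>p1 p2 :: real^2.
           (\<forall>H. closed_halfplane H \<and> (p1 \<in> H \<or> p2 \<in> H) \<longrightarrow>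
                 real (card (P \<inter> H)) \<ge> real n / 5) \<and>
           (\<forall>H. closed_halfplane H \<and> p1 \<in> H \<and> p2 \<in> H \<longrightarrow>
                 real (card (P \<inter> H)) \<ge> 2 * real n / 5)"
proof (cases "n = 0")
  case True
  then show ?thesis by simp
next
  case False
  define B4 where "B4 = {S. S \<subseteq> P \<and> real (card S) > 4 * real n / 5}"
  define B3 where "B3 = {S. S \<subseteq> P \<and> real (card S) > 3 * real n / 5}"
  define C where "C = \<Inter>((\<lambda>Z. convex hull Z) ` B4)"
  have fin4: "finite B4" unfolding B4_def
    by (rule finite_subset[of _ "Pow P"]) (use assms(1) in auto)
  have fin3: "finite B3" unfolding B3_def
    by (rule finite_subset[of _ "Pow P"]) (use assms(1) in auto)
  have defc: "real (card (P - A)) = real n - real (card A)" if "A \<subseteq> P" for A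
  proof -
    have fA: "finite A" using that assms(1) by (rule finite_subset)
    have "card A \<le> card P" using assms(1) that by (rule card_mono)
    moreover have "card (P - A) = card P - card A" using fA that by (rule card_Diff_subset)
    ultimately show ?thesis using assms(2) by (simp add: of_nat_diff)
  qed
  have convC: "convex C" unfolding C_def by (auto intro!: convex_Inter)
  have key: "C \<inter> convex hull S \<inter> convex hull S' \<noteq> {}" if S: "S \<in> B3" and S': "S' \<in> B3" for S S'
  proof -
    define A where "A = B4 \<union> {S, S'}"
    have "\<Inter>((\<lambda>Z. convex hull Z) ` A) \<noteq> {}"
    proof (rule helly_le3)
      show "finite ((\<lambda>Z. convex hull Z) ` A)" using fin4 A_def by simp
      show "\<forall>s\<in>(\<lambda>Z. convex hull Z) ` A. convex s" by simp
      fix t assume t: "t \<subseteq> (\<lambda>Z. convex hull Z) ` A" "t \<noteq> {}" "card t \<le> 3"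
      then obtain T where T: "T \<subseteq> A" "inj_on (\<lambda>Z. convex hull Z) T" "t = (\<lambda>Z. convex hull Z) ` T"
        unfolding subset_image_inj by blast
      have "finite A" using fin4 A_def by simp
      then have finT: "finite T" using T(1) by (rule finite_subset[rotated])
      have cardT: "card T \<le> 3" using card_image[OF T(2)] T(3) t(3) by simp
      have Tne: "T \<noteq> {}" using T t by auto
      have TP: "\<forall>X\<in>T. X \<subseteq> P" using T(1) S S' unfolding A_def B4_def B3_def by auto
      define w where "w = (\<lambda>X::(real^2) set. if X \<in> {S, S'} then 2 * real n / 5 else real n / 5)"
      have lt: "real (card (P - X)) < w X" if "X \<in> T" for X
      proof -
        from that have "X \<in> B4 \<or> X = S \<or> X = S'" using T(1) A_def by auto
        then show "real (card (P - X)) < w X" using S S' TP that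
          by (auto simp: w_def B4_def B3_def defc)
      qed
      have "(\<Sum>X\<in>T. real (card (P - X))) < (\<Sum>X\<in>T. w X)"
        using finT Tne lt by (intro sum_strict_mono) auto
      also have "(\<Sum>X\<in>T. w X) = (\<Sum>X\<in>T. real n / 5 + (if X \<in> {S,S'} then real n / 5 else 0))"
        unfolding w_def by (rule sum.cong) auto
      also have "\<dots> = real (card T) * (real n / 5) + (\<Sum>X\<in>T. if X \<in> {S,S'} then real n / 5 else 0)"
        by (simp add: sum.distrib)
      also have "(\<Sum>X\<in>T. if X \<in> {S,S'} then real n / 5 else 0) = real (card (T \<inter> {S,S'})) * (real n / 5)"
        using finT by (simp add: sum.If_cases Int_def)
      also have "real (card T) * (real n / 5) + real (card (T \<inter> {S,S'})) * (real n / 5) \<le> real n"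
      proof -
        have "card (T \<inter> {S,S'}) \<le> card {S, S'}" by (rule card_mono) auto
        also have "\<dots> \<le> 2" by (cases "S = S'") auto
        finally have c2: "real (card (T \<inter> {S,S'})) \<le> 2" by simp
        have c3: "real (card T) \<le> 3" using cardT by simp
        have "real (card T) * (real n / 5) + real (card (T \<inter> {S,S'})) * (real n / 5)
              = (real (card T) + real (card (T \<inter> {S,S'}))) * (real n / 5)" by (simp add: ring_distribs)
        also have "\<dots> \<le> 5 * (real n / 5)"
          using c2 c3 by (intro mult_right_mono) auto
        finally show ?thesis by simp
      qed
      finally have "(\<Sum>X\<in>T. real (card (P - X))) < real (card P)" using assms(2) by simp
      then have "\<exists>x. \<forall>X\<in>T. x \<in> X" by (rule count_inter[OF assms(1) finT Tne TP])
      then obtain x where x: "\<forall>X\<in>T. x \<in> X" by blast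
      have "x \<in> \<Inter>t" unfolding T(3) using x by (auto intro: hull_inc)
      then show "\<Inter>t \<noteq> {}" by blast
    qed
    moreover have "\<Inter>((\<lambda>Z. convex hull Z) ` A) \<subseteq> C \<inter> convex hull S \<inter> convex hull S'"
      unfolding A_def C_def by blast
    ultimately show ?thesis by blast
  qed
  define I where "I = (\<lambda>S. (\<lambda>x::real^2. x$1) ` (C \<inter> convex hull S))"
  have "\<Inter>(I ` B3) \<noteq> {}"
  proof (rule helly_real)
    show "finite (I ` B3)" using fin3 by simp
    show "\<forall>s\<in>I ` B3. convex s" unfolding I_def
      using convC by (auto intro!: convex_linear_image bounded_linear.linear[OF bounded_linear_vec_nth] convex_Int)
    fix X Y assume "X \<in> I ` B3" "Y \<in> I ` B3"
    then obtain S S' where "S \<in> B3" "S' \<in> B3" "X = I S" "Y = I S'" by auto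
    then obtain x where "x \<in> C \<inter> convex hull S \<inter> convex hull S'" using key by blast
    then have "x$1 \<in> X \<inter> Y" using \<open>X = I S\<close> \<open>Y = I S'\<close> unfolding I_def by auto
    then show "X \<inter> Y \<noteq> {}" by blast
  qed
  then obtain c where c: "\<And>S. S \<in> B3 \<Longrightarrow> c \<in> I S" by blast
  then have "\<forall>S\<in>B3. \<exists>q. q \<in> C \<inter> convex hull S \<and> q$1 = c" unfolding I_def by force
  then obtain q where q: "\<And>S. S \<in> B3 \<Longrightarrow> q S \<in> C \<inter> convex hull S \<and> q S $ 1 = c" by metis
  have PB3: "P \<in> B3" using False assms by (simp add: B3_def)
  define Q where "Q = (\<lambda>S. q S $ 2) ` B3"
  have Qfin: "finite Q" using fin3 Q_def by simp
  have Qne: "Q \<noteq> {}" using PB3 Q_def by auto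
  obtain S1 where S1: "S1 \<in> B3" "q S1 $ 2 = Min Q" using Min_in[OF Qfin Qne] Q_def by auto
  obtain S2 where S2: "S2 \<in> B3" "q S2 $ 2 = Max Q" using Max_in[OF Qfin Qne] Q_def by auto
  have bnd: "q S1 $ 2 \<le> q S $ 2 \<and> q S $ 2 \<le> q S2 $ 2" if "S \<in> B3" for S
    using S1 S2 Qfin that Q_def by auto
  have inC: "q S \<in> convex hull X" if "S \<in> B3" "X \<in> B4" for S X
    using q[OF that(1)] that(2) unfolding C_def by auto
  have cardH: "real (card (P - H)) = real n - real (card (P \<inter> H))" for H
  proof -
    have "P - H = P - (P \<inter> H)" by auto
    then show ?thesis using defc[of "P \<inter> H"] by simp
  qed
  have outside: "\<forall>y\<in>P - {x. inner a x \<le> b}. inner a y > b" for a b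
    by auto
  show ?thesis
  proof (intro exI conjI allI impI)
    fix H assume H: "closed_halfplane H \<and> (q S1 \<in> H \<or> q S2 \<in> H)"
    then obtain a b where ab: "H = {x. inner a x \<le> b}" unfolding closed_halfplane_def by auto
    show "real (card (P \<inter> H)) \<ge> real n / 5"
    proof (rule ccontr)
      assume "\<not> real (card (P \<inter> H)) \<ge> real n / 5"
      then have "P - H \<in> B4" unfolding B4_def using cardH[of H] by auto
      then have "q S1 \<in> convex hull (P - H)" "q S2 \<in> convex hull (P - H)"
        using inC S1(1) S2(1) by auto
      then have "inner a (q S1) > b" "inner a (q S2) > b"
        using hull_out[OF outside[of a b]] ab by auto
      then show False using H ab by auto
    qed
  next
    fix H assume H: "closed_halfplane H \<and> q S1 \<in> H \<and> q S2 \<in> H"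
    then obtain a b where ab: "H = {x. inner a x \<le> b}" unfolding closed_halfplane_def by auto
    show "real (card (P \<inter> H)) \<ge> 2 * real n / 5"
    proof (rule ccontr)
      assume "\<not> real (card (P \<inter> H)) \<ge> 2 * real n / 5"
      then have S: "P - H \<in> B3" unfolding B3_def using cardH[of H] by auto
      then have "q (P - H) \<in> convex hull (P - H)" using q by auto
      then have gt: "inner a (q (P - H)) > b"
        using hull_out[OF outside[of a b]] ab by auto
      have h1: "a$1 * c + a$2 * q S1 $ 2 \<le> b" using H ab q[OF S1(1)] by (auto simp: inner2)
      have h2: "a$1 * c + a$2 * q S2 $ 2 \<le> b" using H ab q[OF S2(1)] by (auto simp: inner2)
      have h3: "a$1 * c + a$2 * q (P - H) $ 2 > b" using gt q[OF S] by (auto simp: inner2)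
      have b1: "q S1 $ 2 \<le> q (P - H) $ 2" "q (P - H) $ 2 \<le> q S2 $ 2" using bnd[OF S] by auto
      show False
      proof (cases "a$2 \<ge> 0")
        case True
        then have "a$2 * q (P - H) $ 2 \<le> a$2 * q S2 $ 2" using b1 by (intro mult_left_mono) auto
        then show False using h2 h3 by linarith
      next
        case False
        then have "a$2 * q (P - H) $ 2 \<le> a$2 * q S1 $ 2" using b1 by (intro mult_left_mono_neg) auto
        then show False using h1 h3 by linarith
      qed
    qed
  qed
qed

end
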